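(* Let $f$ and $g$ be transcendental entire functions with $f\circ g=g\circ f$, let $h$ be a transcendental entire function and $P$ a polynomial of degree at least $2$ such that $P\circ f=h\circ g$. If $z_0\in F(f)\cap BU(f)$, then every $w\in\mathbb{C}$ with $g(w)=z_0$ satisfies $w\in F(f)\cap BU(f)$.
   Context: For an entire function $f$, $f^n$ denotes the $n$-th iterate. The Fatou set $F(f)$ is the set of points having a neighbourhood on which $\{f^n\}$ is normal, and $J(f)=\mathbb{C}\setminus F(f)$ is the Julia set. The escaping set is $I(f)=\{z: f^n(z)\to\infty\}$, $K(f)=\{z: \exists R>0,\ |f^n(z)|\le R\ \forall n\ge0\}$, and the Bungee set is $BU(f)=\mathbb{C}\setminus(I(f)\cup K(f))$. *)

theory Defs
  imports "HOL-Complex_Analysis.Complex_Analysis" "HOL-Computational_Algebra.Polynomial"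
begin

definition transcendental_entire :: "(complex \<Rightarrow> complex) \<Rightarrow> bool" where
  "transcendental_entire f \<longleftrightarrow> f holomorphic_on UNIV \<and> \<not> (\<exists>p. \<forall>z. f z = poly p z)"

definition normal_family_on :: "(nat \<Rightarrow> complex \<Rightarrow> complex) \<Rightarrow> complex set \<Rightarrow> bool" where
  "normal_family_on F U \<longleftrightarrow>
     (\<forall>k :: nat \<Rightarrow> nat. \<exists>r. strict_mono r \<and>
        ((\<exists>g. \<forall>K. compact K \<and> K \<subseteq> U \<longrightarrow>
                 uniform_limit K (\<lambda>n. F (k (r n))) g sequentially) \<or>
         (\<forall>K. compact K \<and> K \<subseteq> U \<longrightarrow>
                 (\<forall>M. \<forall>\<^sub>F n in sequentially. \<forall>z\<in>K. norm (F (k (r n)) z) > M))))"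

definition fatou_set :: "(complex \<Rightarrow> complex) \<Rightarrow> complex set" where
  "fatou_set f = {z. \<exists>U. open U \<and> z \<in> U \<and> normal_family_on (\<lambda>n. f ^^ n) U}"

definition julia_set :: "(complex \<Rightarrow> complex) \<Rightarrow> complex set" where
  "julia_set f = UNIV - fatou_set f"

definition escaping_set :: "(complex \<Rightarrow> complex) \<Rightarrow> complex set" where
  "escaping_set f = {z. filterlim (\<lambda>n. (f ^^ n) z) at_infinity sequentially}"

definition bounded_orbit_set :: "(complex \<Rightarrow> complex) \<Rightarrow> complex set" where
  "bounded_orbit_set f = {z. \<exists>R>0. \<forall>n. norm ((f ^^ n) z) \<le> R}"

definition bungee_set :: "(complex \<Rightarrow> complex) \<Rightarrow> complex set" where
  "bungee_set f = UNIV - (escaping_set f \<union> bounded_orbit_set f)"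

end

theory Submission imports Defs begin

lemma transc_unbounded:
  assumes "transcendental_entire g"
  shows "\<exists>z. norm (g z) > B"
proof (rule ccontr)
  assume "\<not> ?thesis"
  hence "\<forall>z. norm (g z) \<le> B" by (simp add: not_less)
  hence "bounded (range g)" by (auto simp: bounded_iff)
  moreover have "g holomorphic_on UNIV" using assms by (simp add: transcendental_entire_def)
  ultimately have "g constant_on UNIV" using Liouville_theorem by blast
  then obtain c where c: "\<And>z. g z = c" by (auto simp: constant_on_def)
  have "\<forall>z. g z = poly [:c:] z" using c by simp
  thus False using assms unfolding transcendental_entire_def by blast
qed

lemma iter_holo:
  assumes "f holomorphic_on UNIV"
  shows "(f^^n) holomorphic_on UNIV"
proof (induction n)
  case 0 thus ?case by (simp add: id_def)
next
  case (Suc n)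
  have "(f \<circ> (f^^n)) holomorphic_on UNIV"
    by (rule holomorphic_on_compose_gen[OF Suc assms]) auto
  thus ?case by (simp add: funpow_Suc_right[symmetric] o_def comp_def funpow.simps)
qed

lemma iter_comm:
  assumes "f \<circ> g = g \<circ> f"
  shows "g ((f^^n) z) = (f^^n) (g z)"
proof (induction n)
  case 0 thus ?case by simp
next
  case (Suc n)
  have "g (f ((f^^n) z)) = f (g ((f^^n) z))" using assms by (metis comp_apply)
  thus ?case using Suc by simp
qed


lemma L:
  fixes F :: "nat \<Rightarrow> complex \<Rightarrow> complex"
  assumes S: "open S" "connected S"
    and hol: "\<And>m. F m holomorphic_on S"
    and "\<rho> > 0"
    and far: "\<And>m z. z \<in> S \<Longrightarrow> dist (F m z) c \<ge> \<rho>"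
  shows "\<exists>r. strict_mono r \<and>
        ((\<exists>g. \<forall>K. compact K \<and> K \<subseteq> S \<longrightarrow>
                 uniform_limit K (\<lambda>n. F (r n)) g sequentially) \<or>
         (\<forall>K. compact K \<and> K \<subseteq> S \<longrightarrow>
                 (\<forall>M. \<forall>\<^sub>F n in sequentially. \<forall>z\<in>K. norm (F (r n) z) > M)))"
proof -
  define H where "H = (\<lambda>m z. inverse (F m z - c))"
  have nz: "F m z - c \<noteq> 0" if "z \<in> S" for m z
    using far[OF that, of m] \<open>\<rho> > 0\<close> by (auto simp: dist_norm)
  have Hnz: "H m z \<noteq> 0" if "z \<in> S" for m z
    using nz[OF that] by (simp add: H_def)
  have Hhol: "H m holomorphic_on S" for m
    unfolding H_def using nz by (intro holomorphic_intros hol) auto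
  have Hb: "norm (H m z) \<le> 1/\<rho>" if "z \<in> S" for m z
  proof -
    have "\<rho> \<le> norm (F m z - c)" using far[OF that, of m] by (simp add: dist_norm)
    from le_imp_inverse_le[OF this \<open>\<rho> > 0\<close>] show ?thesis
      by (simp add: H_def norm_inverse inverse_eq_divide[symmetric])
  qed
  obtain \<phi> r where phol: "\<phi> holomorphic_on S" and r: "strict_mono (r :: nat \<Rightarrow> nat)"
    and ul: "\<And>K. \<lbrakk>compact K; K \<subseteq> S\<rbrakk> \<Longrightarrow> uniform_limit K (H \<circ> r) \<phi> sequentially"
    apply (rule Montel[OF S(1), of "{h. h holomorphic_on S \<and> (\<forall>z\<in>S. norm (h z) \<le> 1/\<rho>)}" H])
      apply simp
     apply (rule_tac x="1/\<rho>" in exI, blast)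
    using Hhol Hb apply blast
    apply blast
    done
  show ?thesis
  proof (cases "\<exists>z0\<in>S. \<phi> z0 = 0")
    case True
    then obtain z0 where z0: "z0 \<in> S" "\<phi> z0 = 0" by blast
    have "\<phi> constant_on S"
    proof (rule ccontr)
      assume nc: "\<not> \<phi> constant_on S"
      have "\<phi> z0 \<noteq> 0"
        apply (rule Hurwitz_no_zeros[OF S, of "H \<circ> r" \<phi>])
        using Hhol phol ul nc Hnz z0 by auto
      thus False using z0 by simp
    qed
    then have p0: "\<phi> z = 0" if "z \<in> S" for z
      using z0 that by (auto simp: constant_on_def)
    have "\<forall>K. compact K \<and> K \<subseteq> S \<longrightarrow>
                 (\<forall>M. \<forall>\<^sub>F n in sequentially. \<forall>z\<in>K. norm (F (r n) z) > M)"
    proof (intro allI impI)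
      fix K M assume K: "compact K \<and> K \<subseteq> S"
      define e where "e = 1 / (\<bar>M\<bar> + norm c + 1)"
      have e: "e > 0" unfolding e_def by (smt (verit) abs_ge_zero norm_ge_zero divide_pos_pos)
      have "\<forall>\<^sub>F n in sequentially. \<forall>z\<in>K. dist ((H \<circ> r) n z) (\<phi> z) < e"
        using ul[of K] K e uniform_limit_iff by blast
      then show "\<forall>\<^sub>F n in sequentially. \<forall>z\<in>K. norm (F (r n) z) > M"
      proof (rule eventually_mono)
        fix n assume A: "\<forall>z\<in>K. dist ((H \<circ> r) n z) (\<phi> z) < e"
        show "\<forall>z\<in>K. norm (F (r n) z) > M"
        proof
          fix z assume z: "z \<in> K"
          hence zS: "z \<in> S" using K by blast
          have "norm (inverse (F (r n) z - c) - \<phi> z) < e"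
            using A z by (simp add: H_def dist_norm)
          hence "norm (inverse (F (r n) z - c)) < e"
            using p0[OF zS] by simp
          hence "inverse (norm (F (r n) z - c)) < 1 / (\<bar>M\<bar> + norm c + 1)"
            by (simp add: norm_inverse e_def)
          hence "norm (F (r n) z - c) > \<bar>M\<bar> + norm c + 1"
            using nz[OF zS] by (smt (verit) divide_less_cancel inverse_eq_divide norm_ge_zero zero_less_norm_iff inverse_less_imp_less)
          moreover have "norm (F (r n) z - c) \<le> norm (F (r n) z) + norm c" by (rule norm_triangle_ineq4)
          ultimately show "norm (F (r n) z) > M" by linarith
        qed
      qed
    qed
    thus ?thesis using r by blast
  next
    case False
    have "\<forall>K. compact K \<and> K \<subseteq> S \<longrightarrow>
                 uniform_limit K (\<lambda>n. F (r n)) (\<lambda>z. c + inverse (\<phi> z)) sequentially"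
    proof (intro allI impI)
      fix K assume K: "compact K \<and> K \<subseteq> S"
      show "uniform_limit K (\<lambda>n. F (r n)) (\<lambda>z. c + inverse (\<phi> z)) sequentially"
      proof (cases "K = {}")
        case True thus ?thesis by (simp add: uniform_limit_iff)
      next
        case Kne: False
        have cont: "continuous_on K (\<lambda>z. norm (\<phi> z))"
          using K phol by (intro continuous_intros holomorphic_on_imp_continuous_on holomorphic_on_subset[OF phol]) auto
        obtain z1 where z1: "z1 \<in> K" "\<And>z. z \<in> K \<Longrightarrow> norm (\<phi> z1) \<le> norm (\<phi> z)"
          using continuous_attains_inf[OF _ Kne cont] K by blast
        define \<delta> where "\<delta> = norm (\<phi> z1)"
        have \<delta>: "\<delta> > 0" using False z1 K unfolding \<delta>_def by auto
        have \<delta>le: "\<delta> \<le> norm (\<phi> z)" if "z \<in> K" for z using z1 that \<delta>_def by auto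
        show ?thesis unfolding uniform_limit_iff
        proof (intro allI impI)
          fix e :: real assume e: "e > 0"
          define e' where "e' = min (\<delta>/2) (e * \<delta>^2 / 2)"
          have e': "e' > 0" using e \<delta> by (simp add: e'_def)
          have "\<forall>\<^sub>F n in sequentially. \<forall>z\<in>K. dist ((H \<circ> r) n z) (\<phi> z) < e'"
            using ul[of K] K e' uniform_limit_iff by blast
          then show "\<forall>\<^sub>F n in sequentially. \<forall>z\<in>K. dist (F (r n) z) (c + inverse (\<phi> z)) < e"
          proof (rule eventually_mono)
            fix n assume A: "\<forall>z\<in>K. dist ((H \<circ> r) n z) (\<phi> z) < e'"
            show "\<forall>z\<in>K. dist (F (r n) z) (c + inverse (\<phi> z)) < e"
            proof
              fix z assume z: "z \<in> K"
              hence zS: "z \<in> S" using K by blast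
              define a where "a = H (r n) z"
              define b where "b = \<phi> z"
              have ab: "norm (a - b) < e'" using A z by (simp add: a_def b_def dist_norm)
              have nb: "norm b \<ge> \<delta>" using \<delta>le[OF z] b_def by simp
              have na: "norm a \<ge> \<delta>/2"
              proof -
                have "norm b \<le> norm a + norm (a - b)" by (metis add.commute diff_add_cancel norm_triangle_ineq4 norm_minus_commute norm_triangle_ineq)
                thus ?thesis using ab nb e'_def by linarith
              qed
              have Fa: "F (r n) z = c + inverse a" using nz[OF zS] by (simp add: a_def H_def)
              have "dist (F (r n) z) (c + inverse (\<phi> z)) = norm (inverse a - inverse b)"
                by (simp add: Fa b_def dist_norm)
              also have "\<dots> = norm (b - a) / (norm a * norm b)"
                using na nb \<delta> by (simp add: inverse_diff_inverse norm_mult norm_divide divide_simps norm_minus_commute)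
                  (smt (verit) norm_eq_zero)
              also have "\<dots> \<le> norm (b - a) / ((\<delta>/2) * \<delta>)"
                using na nb \<delta> by (intro divide_left_mono mult_mono) (auto intro!: mult_pos_pos)
              also have "\<dots> < e"
              proof -
                have "norm (b - a) < e * \<delta>^2 / 2" using ab e'_def by (simp add: norm_minus_commute)
                thus ?thesis using \<delta> by (simp add: divide_simps power2_eq_square)
              qed
              finally show "dist (F (r n) z) (c + inverse (\<phi> z)) < e" .
            qed
          qed
        qed
      qed
    qed
    thus ?thesis using r by blast
  qed
qed


lemma bound_on_cball:
  fixes g :: "complex \<Rightarrow> complex"
  assumes "continuous_on UNIV g"
  shows "\<exists>C>0. \<forall>x. norm x \<le> R \<longrightarrow> norm (g x) \<le> C"
proof -
  have "compact (g ` cball 0 R)"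
    by (rule compact_continuous_image[OF continuous_on_subset[OF assms]]) auto
  then obtain C where C: "\<forall>y\<in>g ` cball 0 R. norm y \<le> C"
    using compact_imp_bounded bounded_iff by metis
  show ?thesis
    by (rule exI[of _ "max C 1"]) (use C in \<open>auto simp: le_max_iff_disj\<close>)
qed

theorem theorem7:
  fixes f g h :: "complex \<Rightarrow> complex" and P :: "complex poly" and z0 w :: complex
  assumes "transcendental_entire f" and "transcendental_entire g"
    and "f \<circ> g = g \<circ> f"
    and "transcendental_entire h"
    and "degree P \<ge> 2"
    and "(\<lambda>z. poly P (f z)) = h \<circ> g"
    and "z0 \<in> fatou_set f \<inter> bungee_set f"
    and "g w = z0"
  shows "w \<in> fatou_set f \<inter> bungee_set f"
proof -
  have fh: "f holomorphic_on UNIV" and gh: "g holomorphic_on UNIV" and hh: "h holomorphic_on UNIV"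
    using assms(1,2,4) by (auto simp: transcendental_entire_def)
  have gc: "continuous_on UNIV g" and hc: "continuous_on UNIV h"
    using gh hh holomorphic_on_imp_continuous_on by auto
  have comm: "\<And>n z. g ((f^^n) z) = (f^^n) (g z)"
    using iter_comm[OF assms(3)] by blast
  have itc: "\<And>n A. continuous_on A (f^^n)"
    using iter_holo[OF fh] holomorphic_on_imp_continuous_on continuous_on_subset by blast
  have Pf: "\<And>z. poly P (f z) = h (g z)"
    using assms(6) by (metis comp_apply)
  have z0F: "z0 \<in> fatou_set f" and z0B: "z0 \<in> bungee_set f" using assms(7) by auto
  have fatou: "w \<in> fatou_set f"
  proof -
    obtain V where V: "open V" "z0 \<in> V" and nV: "normal_family_on (\<lambda>n. f ^^ n) V"
      using z0F by (auto simp: fatou_set_def)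
    obtain e where e: "e > 0" "ball z0 e \<subseteq> V" using V openE by blast
    have "isCont g w" using gc continuous_on_eq_continuous_at by blast
    then obtain r0 where r0: "r0 > 0" "\<And>x. dist x w < r0 \<Longrightarrow> dist (g x) (g w) < e"
      using e(1) unfolding continuous_at_eps_delta by blast
    have ballV: "g x \<in> V" if "dist x w < r0" for x
      using r0(2)[OF that] e(2) assms(8) by (auto simp: dist_commute)
    define S where "S = ball w (r0/2)"
    define K0 where "K0 = cball w (r0/2)"
    have SK0: "S \<subseteq> K0" unfolding S_def K0_def by auto
    have K0c: "compact (g ` K0)" unfolding K0_def
      by (rule compact_continuous_image[OF continuous_on_subset[OF gc]]) auto
    have K0V: "g ` K0 \<subseteq> V" unfolding K0_def using ballV r0(1)
      by (auto simp: dist_commute)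
    have KV: "compact (g ` K) \<and> g ` K \<subseteq> V" if "compact K" "K \<subseteq> S" for K
    proof
      show "compact (g ` K)" by (rule compact_continuous_image[OF continuous_on_subset[OF gc]]) (use that in auto)
      show "g ` K \<subseteq> V" using that SK0 K0V by blast
    qed
    have "normal_family_on (\<lambda>n. f ^^ n) S"
      unfolding normal_family_on_def
    proof
      fix k :: "nat \<Rightarrow> nat"
      obtain r where r: "strict_mono r" and alt:
        "(\<exists>\<psi>. \<forall>K. compact K \<and> K \<subseteq> V \<longrightarrow> uniform_limit K (\<lambda>n. (f^^(k (r n)))) \<psi> sequentially) \<or>
         (\<forall>K. compact K \<and> K \<subseteq> V \<longrightarrow> (\<forall>M. \<forall>\<^sub>F n in sequentially. \<forall>z\<in>K. norm ((f^^(k (r n))) z) > M))"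
        using nV unfolding normal_family_on_def by blast
      show "\<exists>r. strict_mono r \<and>
        ((\<exists>g. \<forall>K. compact K \<and> K \<subseteq> S \<longrightarrow>
                 uniform_limit K (\<lambda>n. (\<lambda>n. f ^^ n) (k (r n))) g sequentially) \<or>
         (\<forall>K. compact K \<and> K \<subseteq> S \<longrightarrow>
                 (\<forall>M. \<forall>\<^sub>F n in sequentially. \<forall>z\<in>K. norm ((\<lambda>n. f ^^ n) (k (r n)) z) > M)))"
        using alt
      proof
        assume inf: "\<forall>K. compact K \<and> K \<subseteq> V \<longrightarrow> (\<forall>M. \<forall>\<^sub>F n in sequentially. \<forall>z\<in>K. norm ((f^^(k (r n))) z) > M)"
        have "\<forall>K. compact K \<and> K \<subseteq> S \<longrightarrow>
                 (\<forall>M. \<forall>\<^sub>F n in sequentially. \<forall>z\<in>K. norm ((f^^(k (r n))) z) > M)"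
        proof (intro allI impI)
          fix K M assume K: "compact K \<and> K \<subseteq> S"
          obtain C where C: "\<And>x. norm x \<le> \<bar>M\<bar> \<Longrightarrow> norm (g x) \<le> C"
            using bound_on_cball[OF gc, of "\<bar>M\<bar>"] by blast
          have "\<forall>\<^sub>F n in sequentially. \<forall>y\<in>g ` K. norm ((f^^(k (r n))) y) > C"
            using inf KV K by blast
          then show "\<forall>\<^sub>F n in sequentially. \<forall>z\<in>K. norm ((f^^(k (r n))) z) > M"
          proof (rule eventually_mono)
            fix n assume A: "\<forall>y\<in>g ` K. norm ((f^^(k (r n))) y) > C"
            show "\<forall>z\<in>K. norm ((f^^(k (r n))) z) > M"
            proof
              fix z assume "z \<in> K"
              hence "norm (g ((f^^(k (r n))) z)) > C" using A comm by auto
              hence "\<not> norm ((f^^(k (r n))) z) \<le> \<bar>M\<bar>" using C by force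
              thus "norm ((f^^(k (r n))) z) > M" by linarith
            qed
          qed
        qed
        thus ?thesis using r by auto
      next
        assume "\<exists>\<psi>. \<forall>K. compact K \<and> K \<subseteq> V \<longrightarrow> uniform_limit K (\<lambda>n. (f^^(k (r n)))) \<psi> sequentially"
        then obtain \<psi> where psi: "uniform_limit (g ` K0) (\<lambda>n. (f^^(k (r n)))) \<psi> sequentially"
          using K0c K0V by blast
        then obtain N where N: "\<And>n y. n \<ge> N \<Longrightarrow> y \<in> g ` K0 \<Longrightarrow> dist ((f^^(k (r n))) y) (\<psi> y) < 1"
          unfolding uniform_limit_sequentially_iff by (meson zero_less_one)
        have "compact ((f^^(k (r N))) ` (g ` K0))"
          by (rule compact_continuous_image[OF itc K0c])
        then obtain B0 where B0': "\<forall>x\<in>(f^^(k (r N))) ` (g ` K0). norm x \<le> B0"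
          using compact_imp_bounded bounded_iff by blast
        have B0: "\<And>y. y \<in> g ` K0 \<Longrightarrow> norm ((f^^(k (r N))) y) \<le> B0"
          using B0' by blast
        have bnd: "norm ((f^^(k (r n))) y) \<le> B0 + 2" if "n \<ge> N" "y \<in> g ` K0" for n y
        proof -
          have 1: "dist ((f^^(k (r n))) y) (\<psi> y) < 1" using N that by blast
          have 2: "dist ((f^^(k (r N))) y) (\<psi> y) < 1" using N that by blast
          have "dist ((f^^(k (r n))) y) ((f^^(k (r N))) y) \<le> dist ((f^^(k (r n))) y) (\<psi> y) + dist ((f^^(k (r N))) y) (\<psi> y)"
            by (rule dist_triangle2)
          moreover have "norm ((f^^(k (r n))) y) - norm ((f^^(k (r N))) y) \<le> dist ((f^^(k (r n))) y) ((f^^(k (r N))) y)"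
            by (simp add: dist_norm norm_triangle_ineq2)
          ultimately have "norm ((f^^(k (r n))) y) \<le> norm ((f^^(k (r N))) y) + dist ((f^^(k (r n))) y) (\<psi> y) + dist ((f^^(k (r N))) y) (\<psi> y)"
            by linarith
          thus ?thesis using 1 2 B0[OF that(2)] by linarith
        qed
        obtain c where c: "norm (g c) > B0 + 3" using transc_unbounded[OF assms(2)] by blast
        have "isCont g c" using gc continuous_on_eq_continuous_at by blast
        then obtain \<rho> where \<rho>: "\<rho> > 0" "\<And>x. dist x c < \<rho> \<Longrightarrow> dist (g x) (g c) < 1"
          unfolding continuous_at_eps_delta by (meson zero_less_one)
        define G where "G = (\<lambda>m. f^^(k (r (m + N))))"
        have far: "dist (G m z) c \<ge> \<rho>" if "z \<in> S" for m z
        proof (rule ccontr)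
          assume "\<not> ?thesis"
          hence "dist (g (G m z)) (g c) < 1" using \<rho> by auto
          moreover have "norm (g (G m z)) \<le> B0 + 2"
            using bnd[of "m + N" "g z"] that SK0 comm by (auto simp: G_def)
          moreover have "norm (g c) - norm (g (G m z)) \<le> dist (g (G m z)) (g c)"
            by (simp add: dist_norm norm_triangle_ineq2 norm_minus_commute)
          ultimately show False using c by linarith
        qed
        have Ghol: "G m holomorphic_on S" for m
          unfolding G_def using iter_holo[OF fh] holomorphic_on_subset by blast
        obtain r2 where r2: "strict_mono r2" and alt2:
          "(\<exists>g. \<forall>K. compact K \<and> K \<subseteq> S \<longrightarrow>
                 uniform_limit K (\<lambda>n. G (r2 n)) g sequentially) \<or>
           (\<forall>K. compact K \<and> K \<subseteq> S \<longrightarrow>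
                 (\<forall>M. \<forall>\<^sub>F n in sequentially. \<forall>z\<in>K. norm (G (r2 n) z) > M))"
          using L[of S G \<rho> c] Ghol \<rho>(1) far unfolding S_def by auto
        have sm: "strict_mono (\<lambda>n. r (r2 n + N))"
          using r r2 unfolding strict_mono_def by simp
        show ?thesis
          by (rule exI[of _ "\<lambda>n. r (r2 n + N)"]) (use sm alt2 in \<open>simp add: G_def\<close>)
      qed
    qed
    moreover have "open S" "w \<in> S" unfolding S_def using r0(1) by auto
    ultimately show ?thesis unfolding fatou_set_def by blast
  qed
  have notK: "w \<notin> bounded_orbit_set f"
  proof
    assume "w \<in> bounded_orbit_set f"
    then obtain R where "R > 0" and R: "\<And>n. norm ((f^^n) w) \<le> R" by (auto simp: bounded_orbit_set_def)
    obtain C where C: "C > 0" "\<And>x. norm x \<le> R \<Longrightarrow> norm (g x) \<le> C"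
      using bound_on_cball[OF gc, of R] by blast
    have "\<forall>n. norm ((f^^n) z0) \<le> C"
    proof
      fix n
      have "(f^^n) z0 = g ((f^^n) w)" using comm assms(8) by simp
      thus "norm ((f^^n) z0) \<le> C" using C(2)[OF R[of n]] by simp
    qed
    hence "z0 \<in> bounded_orbit_set f" using C(1) by (auto simp: bounded_orbit_set_def)
    thus False using z0B by (simp add: bungee_set_def)
  qed
  have notI: "w \<notin> escaping_set f"
  proof
    assume "w \<in> escaping_set f"
    hence esc: "filterlim (\<lambda>n. (f^^n) w) at_infinity sequentially" by (simp add: escaping_set_def)
    have "z0 \<notin> escaping_set f" using z0B by (simp add: bungee_set_def)
    hence "\<not> filterlim (\<lambda>n. (f^^n) z0) at_infinity sequentially" by (simp add: escaping_set_def)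
    then obtain R where R: "R > 0" "\<not> eventually (\<lambda>n. R \<le> norm ((f^^n) z0)) sequentially"
      using filterlim_at_infinity[OF order_refl] by blast
    obtain Hb where Hb: "Hb > 0" "\<And>x. norm x \<le> R \<Longrightarrow> norm (h x) \<le> Hb"
      using bound_on_cball[OF hc, of R] by blast
    have esc1: "filterlim (\<lambda>n. (f^^(Suc n)) w) at_infinity sequentially"
      using esc filterlim_sequentially_Suc[of "\<lambda>n. (f^^n) w"] by simp
    have "filterlim (\<lambda>n. poly P ((f^^(Suc n)) w)) at_infinity sequentially"
      using filterlim_compose[OF filterlim_poly_at_infinity esc1] assms(5) by simp
    hence "\<forall>r>0. eventually (\<lambda>n. r \<le> norm (poly P ((f^^(Suc n)) w))) sequentially"
      using filterlim_at_infinity[OF order_refl, of "\<lambda>n. poly P ((f^^(Suc n)) w)" sequentially] by auto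
    hence ev: "eventually (\<lambda>n. Hb + 1 \<le> norm (poly P ((f^^(Suc n)) w))) sequentially"
      using Hb(1) by simp
    have "\<exists>n. Hb + 1 \<le> norm (poly P ((f^^(Suc n)) w)) \<and> norm ((f^^n) z0) < R"
    proof (rule ccontr)
      assume "\<not> ?thesis"
      hence A: "\<forall>n. Hb + 1 \<le> norm (poly P ((f^^(Suc n)) w)) \<longrightarrow> R \<le> norm ((f^^n) z0)"
        by (simp add: not_less)
      have "eventually (\<lambda>n. R \<le> norm ((f^^n) z0)) sequentially"
        by (rule eventually_mono[OF ev]) (use A in blast)
      thus False using R(2) by contradiction
    qed
    then obtain n where n1: "Hb + 1 \<le> norm (poly P ((f^^(Suc n)) w))" and n2: "norm ((f^^n) z0) < R"
      by blast
    have "poly P ((f^^(Suc n)) w) = h ((f^^n) z0)"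
      using Pf[of "(f^^n) w"] comm[of n w] assms(8) by simp
    thus False using n1 Hb(2)[of "(f^^n) z0"] n2 by simp
  qed
  show ?thesis using fatou notK notI by (simp add: bungee_set_def)
qed

end
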